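(* Let $p \ge 2$ be an integer, let $k = 2^{p-1}$, and let $M$ be the $k \times (p+1)$ model matrix of the main effect model of the $2^{p-1}$ fractional factorial design of resolution $p$ (defined in the context). Then the set $\mathcal{B}^*$ of all square-free degree $2$ moves for $M'$ is a Markov basis for $M'$; consequently, a minimal Markov basis for $M'$ can be constructed from square-free degree $2$ moves.
   Context: Cells (runs) are indexed by $\mathbf{i} = (i_1,\ldots,i_{p-1}) \in \mathcal{I} = \{0,1\}^{p-1}$, so $|\mathcal{I}| = k = 2^{p-1}$. The $2^{p-1}$ fractional factorial design of resolution $p$ for $p$ two-level factors (levels $\pm 1$) is the design with defining relation that the product of all $p$ factors equals the identity: in run $\mathbf{i}$, factor $m$ ($1 \le m \le p-1$) is at level $(-1)^{i_m}$ and factor $p$ is at level $(-1)^{i_1+\cdots+i_{p-1}}$. The model matrix $M$ of the main effect model has one row per run $\mathbf{i}$, equal to $\big(1, (-1)^{i_1}, \ldots, (-1)^{i_{p-1}}, (-1)^{i_1+\cdots+i_{p-1}}\big)$; $M'$ is its transpose. Vectors in $\mathbb{Z}^k$ are indexed by $\mathcal{I}$. A move for $M'$ is a $\mathbf{z} \in \mathbb{Z}^k$ with $M'\mathbf{z} = \mathbf{0}$ (equivalently: for every $m$ and every $a\in\{0,1\}$, $\sum_{\mathbf{i}: i_m = a} z(\mathbf{i}) = 0$, and $\sum_{\mathbf{i}: \sum_m i_m \text{ even}} z(\mathbf{i}) = \sum_{\mathbf{i}: \sum_m i_m \text{ odd}} z(\mathbf{i}) = 0$). For $\mathbf{b} \in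 \mathbb{N}^k$ ($\mathbb{N}=\{0,1,2,\ldots\}$), the fiber is $\mathcal{F}(M'\mathbf{b}) = \{\mathbf{y} \in \mathbb{N}^k : M'\mathbf{y} = M'\mathbf{b}\}$. For a set $\mathcal{B}$ of moves, let $G(\mathbf{b},\mathcal{B})$ be the graph with vertex set $\mathcal{F}(M'\mathbf{b})$ and an edge between $\mathbf{x},\mathbf{y}$ whenever $\mathbf{y} - \mathbf{x} \in \mathcal{B}$ or $\mathbf{x} - \mathbf{y} \in \mathcal{B}$. A finite set $\mathcal{B}$ of moves is a Markov basis for $M'$ if $G(\mathbf{b},\mathcal{B})$ is connected for every $\mathbf{b} \in \mathbb{N}^k$; it is minimal if no proper subset is a Markov basis. A square-free degree $2$ move is a move $\mathbf{z}$ such that for some distinct cells $\mathbf{i}_1,\mathbf{i}_2,\mathbf{i}_3,\mathbf{i}_4$, $z(\mathbf{i}_1)=z(\mathbf{i}_2)=1$, $z(\mathbf{i}_3)=z(\mathbf{i}_4)=-1$, and $z(\mathbf{i})=0$ for all other cells. *)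

theory Defs
  imports Main
begin

text \<open>Cells (runs): lists i = (i_1,...,i_{p-1}) with entries in {0,1}.
  Vectors in Z^k are functions from cells to int, vanishing outside the cells.\<close>

definition cells :: "nat \<Rightarrow> nat list set" where
  "cells p = {xs. length xs = p - 1 \<and> set xs \<subseteq> {0, 1}}"

definition modelM :: "nat \<Rightarrow> nat list \<Rightarrow> nat \<Rightarrow> int" where
  "modelM p i j = (if j = 0 then 1
                   else if j < p then (-1) ^ (i ! (j - 1))
                   else (-1) ^ (sum_list i))"

definition Mt :: "nat \<Rightarrow> (nat list \<Rightarrow> int) \<Rightarrow> nat \<Rightarrow> int" where
  "Mt p z j = (\<Sum>i\<in>cells p. modelM p i j * z i)"

definition is_vec :: "nat \<Rightarrow> (nat list \<Rightarrow> int) \<Rightarrow> bool" where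
  "is_vec p z \<longleftrightarrow> (\<forall>i. i \<notin> cells p \<longrightarrow> z i = 0)"

definition is_nonneg_vec :: "nat \<Rightarrow> (nat list \<Rightarrow> int) \<Rightarrow> bool" where
  "is_nonneg_vec p z \<longleftrightarrow> is_vec p z \<and> (\<forall>i. 0 \<le> z i)"

definition is_move :: "nat \<Rightarrow> (nat list \<Rightarrow> int) \<Rightarrow> bool" where
  "is_move p z \<longleftrightarrow> is_vec p z \<and> (\<forall>j\<le>p. Mt p z j = 0)"

definition fiber :: "nat \<Rightarrow> (nat list \<Rightarrow> int) \<Rightarrow> (nat list \<Rightarrow> int) set" where
  "fiber p b = {y. is_nonneg_vec p y \<and> (\<forall>j\<le>p. Mt p y j = Mt p b j)}"

definition fiber_edge ::
  "nat \<Rightarrow> (nat list \<Rightarrow> int) \<Rightarrow> (nat list \<Rightarrow> int) set \<Rightarrow> (nat list \<Rightarrow> int) \<Rightarrow> (nat list \<Rightarrow> int) \<Rightarrow> bool" where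
  "fiber_edge p b B x y \<longleftrightarrow> x \<in> fiber p b \<and> y \<in> fiber p b \<and>
     ((\<lambda>i. y i - x i) \<in> B \<or> (\<lambda>i. x i - y i) \<in> B)"

definition fiber_connected :: "nat \<Rightarrow> (nat list \<Rightarrow> int) \<Rightarrow> (nat list \<Rightarrow> int) set \<Rightarrow> bool" where
  "fiber_connected p b B \<longleftrightarrow>
     (\<forall>x\<in>fiber p b. \<forall>y\<in>fiber p b. (fiber_edge p b B)\<^sup>*\<^sup>* x y)"

definition markov_basis :: "nat \<Rightarrow> (nat list \<Rightarrow> int) set \<Rightarrow> bool" where
  "markov_basis p B \<longleftrightarrow> finite B \<and> (\<forall>z\<in>B. is_move p z) \<and>
     (\<forall>b. is_nonneg_vec p b \<longrightarrow> fiber_connected p b B)"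

definition minimal_markov_basis :: "nat \<Rightarrow> (nat list \<Rightarrow> int) set \<Rightarrow> bool" where
  "minimal_markov_basis p B \<longleftrightarrow> markov_basis p B \<and> (\<forall>B'. B' \<subset> B \<longrightarrow> \<not> markov_basis p B')"

definition sqfree_deg2_moves :: "nat \<Rightarrow> (nat list \<Rightarrow> int) set" where
  "sqfree_deg2_moves p = {z. is_move p z \<and>
     (\<exists>i1 i2 i3 i4. i1 \<in> cells p \<and> i2 \<in> cells p \<and> i3 \<in> cells p \<and> i4 \<in> cells p \<and>
        distinct [i1, i2, i3, i4] \<and>
        z i1 = 1 \<and> z i2 = 1 \<and> z i3 = -1 \<and> z i4 = -1 \<and>
        (\<forall>i. i \<notin> {i1, i2, i3, i4} \<longrightarrow> z i = 0))}"

end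

theory Submission
  imports Defs "HOL-Library.Multiset" "HOL-Library.FuncSet"
begin

definition cl :: "nat \<Rightarrow> nat list set" where
  "cl q = {xs. length xs = q \<and> set xs \<subseteq> {0, 1}}"

definition oddn :: "nat list \<Rightarrow> nat" where "oddn v = sum_list v mod 2"

definition msum :: "('a \<Rightarrow> nat) \<Rightarrow> 'a multiset \<Rightarrow> nat" where
  "msum f X = sum_mset (image_mset f X)"

definition mstep :: "nat \<Rightarrow> nat list multiset \<Rightarrow> nat list multiset \<Rightarrow> bool" where
  "mstep q X Y \<longleftrightarrow> (\<exists>N a b c d. X = N + {#a, b#} \<and> Y = N + {#c, d#} \<and>
     a \<in> cl q \<and> b \<in> cl q \<and> c \<in> cl q \<and> d \<in> cl q \<and> distinct [a,b,c,d] \<and>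
     (\<forall>m<q. a!m + b!m = c!m + d!m) \<and> oddn a + oddn b = oddn c + oddn d)"

definition same_stats :: "nat \<Rightarrow> nat list multiset \<Rightarrow> nat list multiset \<Rightarrow> bool" where
  "same_stats q X Y \<longleftrightarrow> size X = size Y \<and> (\<forall>m<q. msum (\<lambda>v. v!m) X = msum (\<lambda>v. v!m) Y)
     \<and> msum oddn X = msum oddn Y"

definition Conn :: "nat \<Rightarrow> bool" where
  "Conn q \<longleftrightarrow> (\<forall>X Y. set_mset X \<subseteq> cl q \<longrightarrow> set_mset Y \<subseteq> cl q \<longrightarrow> same_stats q X Y
      \<longrightarrow> (mstep q)\<^sup>*\<^sup>* X Y)"

lemma msum_add[simp]: "msum f (A + B) = msum f A + msum f B"
  by (simp add: msum_def)
lemma msum_add_mset[simp]: "msum f (add_mset a A) = f a + msum f A"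
  by (simp add: msum_def)
lemma msum_empty[simp]: "msum f {#} = 0"
  by (simp add: msum_def)

lemma oddn_le: "oddn v \<le> 1" by (simp add: oddn_def)

lemma mstep_sym: "mstep q X Y \<Longrightarrow> mstep q Y X"
  unfolding mstep_def by (metis distinct_length_2_or_more distinct.simps(2))

lemma mconn_sym: "(mstep q)\<^sup>*\<^sup>* X Y \<Longrightarrow> (mstep q)\<^sup>*\<^sup>* Y X"
  by (induction rule: rtranclp_induct) (auto intro: converse_rtranclp_into_rtranclp mstep_sym)

lemma mstep_stats: "mstep q X Y \<Longrightarrow> same_stats q X Y"
  unfolding mstep_def same_stats_def by auto

lemma mstep_cl: "mstep q X Y \<Longrightarrow> set_mset X \<subseteq> cl q \<Longrightarrow> set_mset Y \<subseteq> cl q"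
  unfolding mstep_def by auto

lemma same_stats_refl[simp]: "same_stats q X X"
  by (simp add: same_stats_def)
lemma same_stats_sym: "same_stats q X Y \<Longrightarrow> same_stats q Y X"
  by (simp add: same_stats_def)
lemma same_stats_trans: "same_stats q X Y \<Longrightarrow> same_stats q Y Z \<Longrightarrow> same_stats q X Z"
  by (simp add: same_stats_def)

lemma mconn_stats: "(mstep q)\<^sup>*\<^sup>* X Y \<Longrightarrow> same_stats q X Y"
  by (induction rule: rtranclp_induct) (auto intro: same_stats_trans mstep_stats)

lemma mconn_cl: "(mstep q)\<^sup>*\<^sup>* X Y \<Longrightarrow> set_mset X \<subseteq> cl q \<Longrightarrow> set_mset Y \<subseteq> cl q"
  by (induction rule: rtranclp_induct) (auto dest: mstep_cl)

lemma msum_const: "(\<forall>v\<in>#A. f v = c) \<Longrightarrow> msum f A = size A * c"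
  by (induction A) auto

lemma msum_le: "(\<forall>v\<in>#A. f v \<le> 1) \<Longrightarrow> msum f A \<le> size A"
  by (induction A) auto

lemma msum_cong: "(\<forall>v\<in>#A. f v = g v) \<Longrightarrow> msum f A = msum g A"
  by (induction A) auto

lemma msum_image: "msum f (image_mset g A) = msum (\<lambda>v. f (g v)) A"
  by (induction A) auto

lemma msum_filter_split: "msum f A = msum f (filter_mset P A) + msum f (filter_mset (\<lambda>x. \<not> P x) A)"
  by (induction A) auto

lemma cl_Suc_iff: "(t # w \<in> cl (Suc q)) \<longleftrightarrow> t \<in> {0,1} \<and> w \<in> cl q"
  by (auto simp: cl_def)

lemma cl_Suc_cases: assumes "v \<in> cl (Suc q)"
  obtains t w where "v = t # w" "t \<in> {0,1}" "w \<in> cl q"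
  using assms by (cases v) (auto simp: cl_def)

lemma cl_nth: "v \<in> cl q \<Longrightarrow> m < q \<Longrightarrow> v ! m \<in> {0,1}"
  unfolding cl_def by (auto dest!: nth_mem)

lemma cl_0: "cl 0 = {[]}"
  by (auto simp: cl_def)

lemma finite_cl: "finite (cl q)"
proof -
  have "cl q = {xs. set xs \<subseteq> {0,1} \<and> length xs = q}" by (auto simp: cl_def)
  then show ?thesis using finite_lists_length_eq[of "{0::nat,1}" q] by simp
qed

lemma mset_single_repl: "set_mset X \<subseteq> {a} \<Longrightarrow> X = replicate_mset (size X) a"
  by (induction X) auto

lemma Conn_0: "Conn 0"
  unfolding Conn_def
proof (intro allI impI)
  fix X Y :: "nat list multiset"
  assume "set_mset X \<subseteq> cl 0" "set_mset Y \<subseteq> cl 0" "same_stats 0 X Y"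
  then have "X = replicate_mset (size X) []" "Y = replicate_mset (size Y) []" "size X = size Y"
    using mset_single_repl[of X "[]"] mset_single_repl[of Y "[]"] by (auto simp: cl_0 same_stats_def)
  then show "(mstep 0)\<^sup>*\<^sup>* X Y" by (metis rtranclp.rtrancl_refl)
qed

definition cnt :: "nat list multiset \<Rightarrow> nat \<Rightarrow> nat \<Rightarrow> nat" where
  "cnt x e t = size (filter_mset (\<lambda>v. hd v = t \<and> oddn (tl v) = e) x)"

definition se :: "nat list multiset \<Rightarrow> nat" where
  "se x = msum (\<lambda>v. oddn (tl v)) x"

lemma oddn_Cons: "oddn (t # w) = (t + oddn w) mod 2"
  by (simp add: oddn_def mod_add_right_eq)

lemma oddn_cases: "oddn w = 0 \<or> oddn w = 1"
  by (auto simp: oddn_def)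

lemma cnt_rel:
  assumes "set_mset x \<subseteq> cl (Suc q)"
  shows "size x = cnt x 0 0 + cnt x 0 1 + cnt x 1 0 + cnt x 1 1 \<and>
    msum (\<lambda>v. v!0) x = cnt x 0 1 + cnt x 1 1 \<and>
    msum oddn x = cnt x 0 1 + cnt x 1 0 \<and>
    se x = cnt x 1 0 + cnt x 1 1 \<and>
    size (filter_mset (\<lambda>v. oddn (tl v) = 1) x) = cnt x 1 0 + cnt x 1 1 \<and>
    size (filter_mset (\<lambda>v. \<not> oddn (tl v) = 1) x) = cnt x 0 0 + cnt x 0 1"
  using assms
proof (induction x)
  case empty
  then show ?case by (simp add: cnt_def se_def)
next
  case (add v x)
  then have IH: "size x = cnt x 0 0 + cnt x 0 1 + cnt x 1 0 + cnt x 1 1 \<and>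
    msum (\<lambda>v. v!0) x = cnt x 0 1 + cnt x 1 1 \<and>
    msum oddn x = cnt x 0 1 + cnt x 1 0 \<and>
    se x = cnt x 1 0 + cnt x 1 1 \<and>
    size (filter_mset (\<lambda>v. oddn (tl v) = 1) x) = cnt x 1 0 + cnt x 1 1 \<and>
    size (filter_mset (\<lambda>v. \<not> oddn (tl v) = 1) x) = cnt x 0 0 + cnt x 0 1"
    and "v \<in> cl (Suc q)" by auto
  then obtain t w where v: "v = t # w" "t \<in> {0,1}" by (auto elim: cl_Suc_cases)
  have "oddn w = 0 \<or> oddn w = 1" by (rule oddn_cases)
  then show ?case using IH v by (auto simp: cnt_def se_def oddn_Cons)
qed

lemma count_image_tl:
  assumes "set_mset x \<subseteq> cl (Suc q)"
  shows "count (image_mset tl x) w = count x (0 # w) + count x (1 # w)"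
  using assms
proof (induction x)
  case empty
  then show ?case by simp
next
  case (add v x)
  then have IH: "count (image_mset tl x) w = count x (0 # w) + count x (1 # w)"
    and "v \<in> cl (Suc q)" by auto
  then obtain t w' where v: "v = t # w'" "t \<in> {0,1}" by (auto elim: cl_Suc_cases)
  then show ?case using IH by auto
qed

lemma size_count_exists:
  assumes "size A = size B" "count B v < count A v"
  shows "\<exists>u. u \<noteq> v \<and> count A u < count B u"
proof (rule ccontr)
  assume "\<not> ?thesis"
  then have "\<forall>u. count B u \<le> count A u" using assms(2) by (metis less_imp_le not_le)
  then have "B \<subseteq># A" by (simp add: subseteq_mset_def)
  moreover have "B \<noteq> A" using assms(2) by auto
  ultimately have "size B < size A" by (simp add: mset_subset_size subset_mset.le_neq_trans)
  then show False using assms(1) by simp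
qed

lemma split2:
  assumes "a \<noteq> b" "a \<in># x" "b \<in># x"
  shows "x = (x - {#a, b#}) + {#a, b#}"
proof (rule multiset_eqI)
  fix i
  have "count x a \<ge> 1" "count x b \<ge> 1" using assms by auto
  then show "count x i = count (x - {#a, b#} + {#a, b#}) i" using assms(1) by auto
qed

lemma gen_decrease:
  assumes "a \<noteq> b" "c \<noteq> d" "a \<noteq> c" "a \<noteq> d" "b \<noteq> c" "b \<noteq> d"
    "count y a < count x a" "count y b < count x b"
    "count x c < count y c" "count x d < count y d"
  shows "size ((x - {#a, b#} + {#c, d#}) - y) < size (x - y)"
proof -
  have eq: "x - y = ((x - {#a, b#} + {#c, d#}) - y) + {#a, b#}"
  proof (rule multiset_eqI)
    fix i
    show "count (x - y) i = count ((x - {#a, b#} + {#c, d#}) - y + {#a, b#}) i"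
      using assms by (cases "i = a"; cases "i = b"; cases "i = c"; cases "i = d") auto
  qed
  show ?thesis by (subst eq) simp
qed

lemma count_gt_in: assumes "n < count M a" shows "a \<in># M"
proof -
  have "0 < count M a" using assms by linarith
  then show ?thesis by simp
qed

lemma step2_aux:
  assumes "size (x - y) = n"
    "set_mset x \<subseteq> cl (Suc q)" "set_mset y \<subseteq> cl (Suc q)" "same_stats (Suc q) x y"
    "image_mset tl x = image_mset tl y"
  shows "(mstep (Suc q))\<^sup>*\<^sup>* x y"
  using assms
proof (induction n arbitrary: x rule: less_induct)
  case (less n x)
  show ?case
  proof (cases "x = y")
    case True
    then show ?thesis by simp
  next
    case False
    have szeq: "size x = size y" using less.prems(4) by (simp add: same_stats_def)
    have "\<exists>v. count y v < count x v"
    proof (rule ccontr)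
      assume "\<not> ?thesis"
      then have "x \<subseteq># y" by (simp add: subseteq_mset_def not_less)
      then have "x \<subset># y" using False by (simp add: subset_mset.le_neq_trans)
      then show False using szeq mset_subset_size by fastforce
    qed
    then obtain v where v: "count y v < count x v" by blast
    then have "v \<in># x" by (rule count_gt_in)
    then have "v \<in> cl (Suc q)" using less.prems(2) by auto
    then obtain t w where vtw: "v = t # w" "t \<in> {0,1}" "w \<in> cl q" by (auto elim: cl_Suc_cases)
    define t' where "t' = 1 - t"
    have tt: "t' \<in> {0,1}" "t' \<noteq> t" using vtw by (auto simp: t'_def)
    have ctl: "\<And>z u. set_mset z \<subseteq> cl (Suc q) \<Longrightarrow> count (image_mset tl z) u = count z (t # u) + count z (t' # u)"
      using count_image_tl vtw(2) by (auto simp: t'_def)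
    have c1: "count x (t' # w) < count y (t' # w)"
      using ctl[OF less.prems(2), of w] ctl[OF less.prems(3), of w] less.prems(5) v vtw(1) by simp
    define e where "e = oddn w"
    define P where "P = (\<lambda>u::nat list. hd u = t \<and> oddn (tl u) = e)"
    have cntx: "cnt x e t = cnt y e t"
    proof -
      have "se x = se y"
        using less.prems(5) msum_image[of oddn tl x] msum_image[of oddn tl y] by (simp add: se_def)
      moreover have "msum oddn x = msum oddn y" "size x = size y" "msum (\<lambda>v. v!0) x = msum (\<lambda>v. v!0) y"
        using less.prems(4) by (auto simp: same_stats_def)
      ultimately have "cnt x 0 0 = cnt y 0 0 \<and> cnt x 0 1 = cnt y 0 1 \<and> cnt x 1 0 = cnt y 1 0 \<and> cnt x 1 1 = cnt y 1 1"
        using cnt_rel[OF less.prems(2)] cnt_rel[OF less.prems(3)] by linarith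
      moreover have "e = 0 \<or> e = 1" "t = 0 \<or> t = 1" using oddn_cases vtw by (auto simp: e_def)
      ultimately show ?thesis by auto
    qed
    have s1: "size (filter_mset P x) = size (filter_mset P y)"
      using cntx by (simp add: cnt_def P_def)
    have s2: "count (filter_mset P y) v < count (filter_mset P x) v"
      using v vtw by (simp add: P_def e_def)
    obtain u where u: "u \<noteq> v" "count (filter_mset P x) u < count (filter_mset P y) u"
      using size_count_exists[OF s1 s2] by (elim exE conjE)
    then have Pu: "P u" and u2: "count x u < count y u" by (auto split: if_splits)
    have "u \<in># y" using u2 by (rule count_gt_in)
    then have "u \<in> cl (Suc q)" using less.prems(3) by auto
    then obtain t2 w2 where utw: "u = t2 # w2" "w2 \<in> cl q" by (auto elim: cl_Suc_cases)
    have t2: "t2 = t" and ew2: "oddn w2 = e" using Pu utw by (auto simp: P_def)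
    have ww2: "w2 \<noteq> w" using u(1) utw vtw t2 by auto
    have c2: "count y (t' # w2) < count x (t' # w2)"
      using ctl[OF less.prems(2), of w2] ctl[OF less.prems(3), of w2] less.prems(5) u2 utw t2 by simp
    define a where "a = t # w"
    define b where "b = t' # w2"
    define c where "c = t' # w"
    define d where "d = t # w2"
    have dist: "a \<noteq> b" "c \<noteq> d" "a \<noteq> c" "a \<noteq> d" "b \<noteq> c" "b \<noteq> d"
      using tt ww2 by (auto simp: a_def b_def c_def d_def)
    have ax: "a \<in># x" "b \<in># x"
      using v vtw c2 by (auto simp: a_def b_def intro: count_gt_in)
    define N where "N = x - {#a, b#}"
    define x' where "x' = N + {#c, d#}"
    have xN: "x = N + {#a, b#}" unfolding N_def using split2[OF dist(1) ax] .
    have cells: "a \<in> cl (Suc q)" "b \<in> cl (Suc q)" "c \<in> cl (Suc q)" "d \<in> cl (Suc q)"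
      using vtw tt utw by (auto simp: a_def b_def c_def d_def cl_Suc_iff)
    have coord: "\<forall>m<Suc q. a!m + b!m = c!m + d!m"
    proof (intro allI impI)
      fix m assume "m < Suc q"
      show "a!m + b!m = c!m + d!m"
        by (cases m) (auto simp: a_def b_def c_def d_def)
    qed
    have par: "oddn a + oddn b = oddn c + oddn d"
      using ew2 tt vtw(2) by (auto simp: a_def b_def c_def d_def oddn_Cons e_def)
    have step: "mstep (Suc q) x x'"
      unfolding mstep_def x'_def
      using xN cells dist coord par by (intro exI[of _ N] exI[of _ a] exI[of _ b] exI[of _ c] exI[of _ d]) auto
    have x'cl: "set_mset x' \<subseteq> cl (Suc q)" using mstep_cl[OF step less.prems(2)] .
    have x'st: "same_stats (Suc q) x' y"
      using same_stats_trans[OF same_stats_sym[OF mstep_stats[OF step]] less.prems(4)] .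
    have x'tl: "image_mset tl x' = image_mset tl y"
      using less.prems(5) xN by (simp add: x'_def a_def b_def c_def d_def add_mset_commute)
    have x'n: "size (x' - y) < n"
      using gen_decrease[OF dist, of y x] v vtw c1 c2 u2 utw t2 less.prems(1)
      by (simp add: x'_def N_def a_def b_def c_def d_def)
    have "(mstep (Suc q))\<^sup>*\<^sup>* x' y"
      using less.IH[OF x'n refl x'cl less.prems(3) x'st x'tl] .
    then show ?thesis using step by (simp add: converse_rtranclp_into_rtranclp)
  qed
qed

lemma parity_lift:
  fixes t1 t2 :: nat
  assumes "e1 \<le> 1" "e2 \<le> 1" "e3 \<le> 1" "e4 \<le> 1" "e1 + e2 = e3 + e4"
  shows "(if e3 = e1 then (t1 + e1) mod 2 + (t2 + e2) mod 2 = (t1 + e3) mod 2 + (t2 + e4) mod 2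
          else (t1 + e1) mod 2 + (t2 + e2) mod 2 = (t2 + e3) mod 2 + (t1 + e4) mod 2)"
proof (cases "e3 = e1")
  case True
  then have "e4 = e2" using assms by linarith
  then show ?thesis using True by simp
next
  case False
  then have "e3 = e2" "e4 = e1" using assms by linarith+
  then show ?thesis using False by simp
qed

lemma lift1:
  assumes "mstep q X Y" "set_mset x \<subseteq> cl (Suc q)" "image_mset tl x = X"
  shows "\<exists>x'. mstep (Suc q) x x' \<and> image_mset tl x' = Y"
proof -
  obtain N w1 w2 w3 w4 where XY: "X = N + {#w1, w2#}" "Y = N + {#w3, w4#}"
    and cells: "w1 \<in> cl q" "w2 \<in> cl q" "w3 \<in> cl q" "w4 \<in> cl q"
    and dist: "distinct [w1, w2, w3, w4]"
    and coord: "\<forall>m<q. w1!m + w2!m = w3!m + w4!m"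
    and par: "oddn w1 + oddn w2 = oddn w3 + oddn w4"
    using assms(1) unfolding mstep_def by blast
  have "w1 \<in># image_mset tl x" using assms(3) XY by simp
  then obtain v1 where v1: "v1 \<in># x" "tl v1 = w1" by auto
  have "w2 \<in># image_mset tl (x - {#v1#})"
    using assms(3) XY v1 by (simp add: image_mset_Diff)
  then obtain v2 where v2: "v2 \<in># x - {#v1#}" "tl v2 = w2" by auto
  have v1cl: "v1 \<in> cl (Suc q)" using v1 assms(2) by auto
  then obtain t1 where t1: "v1 = t1 # w1" "t1 \<in> {0,1}" using v1(2) by (auto elim: cl_Suc_cases)
  have v2x: "v2 \<in># x" using v2(1) by (meson in_diffD)
  then have "v2 \<in> cl (Suc q)" using assms(2) by auto
  then obtain t2 where t2: "v2 = t2 # w2" "t2 \<in> {0,1}" using v2(2) by (auto elim: cl_Suc_cases)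
  have v12: "v1 \<noteq> v2" using dist t1 t2 by auto
  define x0 where "x0 = x - {#v1, v2#}"
  have xx0: "x = x0 + {#v1, v2#}" unfolding x0_def using split2[OF v12 v1(1) v2x] .
  have imx0: "image_mset tl x0 = N"
    using assms(3) XY xx0 v1(2) v2(2) by (simp add: add_mset_commute)
  define t3 where "t3 = (if oddn w3 = oddn w1 then t1 else t2)"
  define t4 where "t4 = (if oddn w3 = oddn w1 then t2 else t1)"
  define x' where "x' = x0 + {#t3 # w3, t4 # w4#}"
  have t34: "t3 \<in> {0,1}" "t4 \<in> {0,1}" using t1 t2 by (auto simp: t3_def t4_def)
  have cells': "v1 \<in> cl (Suc q)" "v2 \<in> cl (Suc q)" "t3 # w3 \<in> cl (Suc q)" "t4 # w4 \<in> cl (Suc q)"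
    using t1 t2 t34 cells by (auto simp: cl_Suc_iff)
  have dist': "distinct [v1, v2, t3 # w3, t4 # w4]" using dist t1 t2 by auto
  have coord': "\<forall>m<Suc q. v1!m + v2!m = (t3 # w3)!m + (t4 # w4)!m"
  proof (intro allI impI)
    fix m assume m: "m < Suc q"
    show "v1!m + v2!m = (t3 # w3)!m + (t4 # w4)!m"
    proof (cases m)
      case 0
      then show ?thesis using t1 t2 by (auto simp: t3_def t4_def)
    next
      case (Suc m')
      then show ?thesis using t1 t2 coord m by auto
    qed
  qed
  have par': "oddn v1 + oddn v2 = oddn (t3 # w3) + oddn (t4 # w4)"
    using parity_lift[OF oddn_le oddn_le oddn_le oddn_le par, of t1 t2] t1 t2
    by (auto simp: oddn_Cons t3_def t4_def split: if_splits)
  have "mstep (Suc q) x x'"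
    unfolding mstep_def x'_def
    using xx0 cells' dist' coord' par'
    by (intro exI[of _ x0] exI[of _ v1] exI[of _ v2] exI[of _ "t3 # w3"] exI[of _ "t4 # w4"]) simp
  moreover have "image_mset tl x' = Y" using imx0 XY by (simp add: x'_def)
  ultimately show ?thesis by blast
qed

lemma lift_rt:
  assumes "(mstep q)\<^sup>*\<^sup>* X Y" "set_mset x \<subseteq> cl (Suc q)" "image_mset tl x = X"
  shows "\<exists>x'. (mstep (Suc q))\<^sup>*\<^sup>* x x' \<and> image_mset tl x' = Y"
  using assms(1)
proof (induction rule: rtranclp_induct)
  case base
  then show ?case using assms(3) by blast
next
  case (step Y' Y)
  then obtain x' where x': "(mstep (Suc q))\<^sup>*\<^sup>* x x'" "image_mset tl x' = Y'" by blast
  have "set_mset x' \<subseteq> cl (Suc q)" using mconn_cl[OF x'(1) assms(2)] .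
  then obtain x'' where x'': "mstep (Suc q) x' x''" "image_mset tl x'' = Y"
    using lift1[OF step(2) _ x'(2)] by blast
  have "(mstep (Suc q))\<^sup>*\<^sup>* x x''" using rtranclp.rtrancl_into_rtrancl[OF x'(1) x''(1)] .
  then show ?case using x''(2) by blast
qed

lemma oddn_update:
  assumes "m < length w" "w!m \<in> {0,1}" "v \<in> {0,1}" "v \<noteq> w!m"
  shows "oddn (w[m:=v]) = 1 - oddn w"
proof -
  have S: "sum_list (w[m:=v]) = sum_list w + v - w!m" using sum_list_update[OF assms(1)] .
  have le: "w!m \<le> sum_list w" using elem_le_sum_list[OF assms(1)] .
  show ?thesis
  proof (cases "w!m = 0")
    case True
    then have "v = 1" using assms by auto
    then have "sum_list (w[m:=v]) = sum_list w + 1" using S True by simp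
    then show ?thesis unfolding oddn_def by presburger
  next
    case False
    then have "w!m = 1" "v = 0" using assms by auto
    then have "sum_list (w[m:=v]) + 1 = sum_list w" using S le by simp
    then show ?thesis unfolding oddn_def by presburger
  qed
qed

lemma cl_update: "w \<in> cl q \<Longrightarrow> v \<in> {0,1} \<Longrightarrow> w[m:=v] \<in> cl q"
  unfolding cl_def using set_update_subset_insert[of w m v] by auto

lemma swapmove:
  assumes x: "set_mset x \<subseteq> cl (Suc q)" and a: "0 # w \<in># x" and b: "1 # w' \<in># x"
    and e: "oddn w = oddn w'" and m: "m < q" and ne: "w!m \<noteq> w'!m"
  shows "\<exists>x'. mstep (Suc q) x x' \<and> se x' + 2 * oddn w = se x + 2 * (1 - oddn w)"
proof -
  have acl: "0 # w \<in> cl (Suc q)" and bcl: "1 # w' \<in> cl (Suc q)" using a b x by auto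
  then have wcl: "w \<in> cl q" "w' \<in> cl q" by (auto simp: cl_Suc_iff)
  then have lw: "length w = q" "length w' = q" by (auto simp: cl_def)
  have wm: "w!m \<in> {0,1}" "w'!m \<in> {0,1}" using cl_nth wcl m by auto
  define c where "c = 0 # w[m := w'!m]"
  define d where "d = 1 # w'[m := w!m]"
  have oc: "oddn (w[m := w'!m]) = 1 - oddn w"
    using oddn_update[of m w "w'!m"] lw m wm ne by auto
  have od: "oddn (w'[m := w!m]) = 1 - oddn w"
    using oddn_update[of m w' "w!m"] lw m wm ne e by auto
  have ccl: "c \<in> cl (Suc q)" "d \<in> cl (Suc q)"
    using wcl wm by (auto simp: c_def d_def cl_Suc_iff intro!: cl_update)
  have ab: "0 # w \<noteq> 1 # w'" by simp
  have dist: "distinct [0 # w, 1 # w', c, d]"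
    using ne lw m by (auto simp: c_def d_def) (metis nth_list_update_eq)+
  define N where "N = x - {#0 # w, 1 # w'#}"
  have xN: "x = N + {#0 # w, 1 # w'#}" unfolding N_def using split2[OF ab a b] .
  have coord: "\<forall>i<Suc q. (0 # w)!i + (1 # w')!i = c!i + d!i"
  proof (intro allI impI)
    fix i assume i: "i < Suc q"
    show "(0 # w)!i + (1 # w')!i = c!i + d!i"
    proof (cases i)
      case 0
      then show ?thesis by (simp add: c_def d_def)
    next
      case (Suc j)
      then show ?thesis using lw i by (cases "j = m") (auto simp: c_def d_def nth_list_update)
    qed
  qed
  have eo: "oddn w \<le> 1" by (rule oddn_le)
  have par: "oddn (0 # w) + oddn (1 # w') = oddn c + oddn d"
    using oc od e oddn_cases[of w] by (auto simp: c_def d_def oddn_Cons)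
  define x' where "x' = N + {#c, d#}"
  have "mstep (Suc q) x x'"
    unfolding mstep_def x'_def
    using xN acl bcl ccl dist coord par
    by (intro exI[of _ N] exI[of _ "0 # w"] exI[of _ "1 # w'"] exI[of _ c] exI[of _ d]) simp
  moreover have "se x' + 2 * oddn w = se x + 2 * (1 - oddn w)"
    using xN oc od e by (simp add: x'_def se_def c_def d_def)
  ultimately show ?thesis by blast
qed

lemma diff_pos: "length w = length u \<Longrightarrow> w \<noteq> u \<Longrightarrow> \<exists>m<length w. w!m \<noteq> u!m"
  using nth_equalityI by blast

lemma filter_nonempty:
  "0 < size (filter_mset P M) \<Longrightarrow> \<exists>a. a \<in># M \<and> P a"
  by (induction M) (auto split: if_splits)

lemma cl_Suc_hd_tl: "v \<in> cl (Suc q) \<Longrightarrow> v = hd v # tl v \<and> hd v \<in> {0,1} \<and> tl v \<in> cl q"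
  by (auto elim: cl_Suc_cases)

lemma cl_len: "w \<in> cl q \<Longrightarrow> length w = q" by (simp add: cl_def)

lemma step0:
  assumes x: "set_mset x \<subseteq> cl (Suc q)" and y: "set_mset y \<subseteq> cl (Suc q)"
    and st: "same_stats (Suc q) x y" and lt: "se y < se x"
  shows "se y + 2 \<le> se x \<and> ((\<exists>x'. mstep (Suc q) x x' \<and> se x' + 2 = se x) \<or>
     (\<exists>y'. mstep (Suc q) y y' \<and> se y' = se y + 2))"
proof -
  have Rx: "size x = cnt x 0 0 + cnt x 0 1 + cnt x 1 0 + cnt x 1 1"
    "msum (\<lambda>v. v!0) x = cnt x 0 1 + cnt x 1 1" "msum oddn x = cnt x 0 1 + cnt x 1 0"
    "se x = cnt x 1 0 + cnt x 1 1"
    "size (filter_mset (\<lambda>v. oddn (tl v) = 1) x) = cnt x 1 0 + cnt x 1 1"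
    "size (filter_mset (\<lambda>v. \<not> oddn (tl v) = 1) x) = cnt x 0 0 + cnt x 0 1"
    using cnt_rel[OF x] by auto
  have Ry: "size y = cnt y 0 0 + cnt y 0 1 + cnt y 1 0 + cnt y 1 1"
    "msum (\<lambda>v. v!0) y = cnt y 0 1 + cnt y 1 1" "msum oddn y = cnt y 0 1 + cnt y 1 0"
    "se y = cnt y 1 0 + cnt y 1 1"
    "size (filter_mset (\<lambda>v. oddn (tl v) = 1) y) = cnt y 1 0 + cnt y 1 1"
    "size (filter_mset (\<lambda>v. \<not> oddn (tl v) = 1) y) = cnt y 0 0 + cnt y 0 1"
    using cnt_rel[OF y] by auto
  have S: "size x = size y" "msum (\<lambda>v. v!0) x = msum (\<lambda>v. v!0) y" "msum oddn x = msum oddn y"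
    using st by (auto simp: same_stats_def)
  have h1: "int (cnt x 1 1) - int (cnt y 1 1) = int (cnt x 1 0) - int (cnt y 1 0)"
    using Rx Ry S by linarith
  have h2: "cnt y 1 1 < cnt x 1 1" using h1 Rx Ry lt by linarith
  then have h3: "cnt y 1 1 + 1 \<le> cnt x 1 1" by simp
  have I: "cnt y 1 0 < cnt x 1 0" "cnt x 0 0 < cnt y 0 0" "cnt x 0 1 < cnt y 0 1" "se y + 2 \<le> se x"
    using h1 h2 h3 Rx Ry S lt by linarith+
  obtain a0 where a0: "a0 \<in># x" "hd a0 = 0 \<and> oddn (tl a0) = 1"
    using filter_nonempty[of "\<lambda>v. hd v = 0 \<and> oddn (tl v) = 1" x] I(1) by (auto simp: cnt_def)
  obtain b0 where b0: "b0 \<in># x" "hd b0 = 1 \<and> oddn (tl b0) = 1"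
    using filter_nonempty[of "\<lambda>v. hd v = 1 \<and> oddn (tl v) = 1" x] h2 by (auto simp: cnt_def)
  obtain c0 where c0: "c0 \<in># y" "hd c0 = 0 \<and> oddn (tl c0) = 0"
    using filter_nonempty[of "\<lambda>v. hd v = 0 \<and> oddn (tl v) = 0" y] I(2) by (auto simp: cnt_def)
  obtain d0 where d0: "d0 \<in># y" "hd d0 = 1 \<and> oddn (tl d0) = 0"
    using filter_nonempty[of "\<lambda>v. hd v = 1 \<and> oddn (tl v) = 0" y] I(3) by (auto simp: cnt_def)
  show ?thesis
  proof (cases "\<exists>a b. a \<in># x \<and> b \<in># x \<and> hd a = 0 \<and> hd b = 1 \<and> oddn (tl a) = 1 \<and> oddn (tl b) = 1 \<and> tl a \<noteq> tl b")
    case True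
    then obtain a b where ab: "a \<in># x" "b \<in># x" "hd a = 0" "hd b = 1" "oddn (tl a) = 1" "oddn (tl b) = 1" "tl a \<noteq> tl b"
      by blast
    have ac: "a = 0 # tl a" "tl a \<in> cl q" using cl_Suc_hd_tl[of a q] ab x by auto
    have bc: "b = 1 # tl b" "tl b \<in> cl q" using cl_Suc_hd_tl[of b q] ab x by auto
    have la: "length (tl a) = q" "length (tl b) = q" using cl_len ac(2) bc(2) by blast+
    obtain m where m: "m < q" "tl a ! m \<noteq> tl b ! m"
      using diff_pos[of "tl a" "tl b"] la ab(7) by auto
    obtain x' where "mstep (Suc q) x x'" "se x' + 2 * oddn (tl a) = se x + 2 * (1 - oddn (tl a))"
      using swapmove[OF x _ _ _ m] ab ac bc by (metis (no_types, lifting))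
    then show ?thesis using I ab by auto
  next
    case nA: False
    show ?thesis
    proof (cases "\<exists>a b. a \<in># y \<and> b \<in># y \<and> hd a = 0 \<and> hd b = 1 \<and> oddn (tl a) = 0 \<and> oddn (tl b) = 0 \<and> tl a \<noteq> tl b")
      case True
      then obtain a b where ab: "a \<in># y" "b \<in># y" "hd a = 0" "hd b = 1" "oddn (tl a) = 0" "oddn (tl b) = 0" "tl a \<noteq> tl b"
        by blast
      have ac: "a = 0 # tl a" "tl a \<in> cl q" using cl_Suc_hd_tl[of a q] ab y by auto
      have bc: "b = 1 # tl b" "tl b \<in> cl q" using cl_Suc_hd_tl[of b q] ab y by auto
      have la: "length (tl a) = q" "length (tl b) = q" using cl_len ac(2) bc(2) by blast+
      obtain m where m: "m < q" "tl a ! m \<noteq> tl b ! m"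
        using diff_pos[of "tl a" "tl b"] la ab(7) by auto
      obtain y' where "mstep (Suc q) y y'" "se y' + 2 * oddn (tl a) = se y + 2 * (1 - oddn (tl a))"
        using swapmove[OF y _ _ _ m] ab ac bc by (metis (no_types, lifting))
      then show ?thesis using I ab by auto
    next
      case nB: False
      define w where "w = tl a0"
      define u where "u = tl c0"
      have xw: "\<forall>v\<in>#x. oddn (tl v) = 1 \<longrightarrow> tl v = w"
      proof (intro ballI impI)
        fix v assume v: "v \<in># x" "oddn (tl v) = 1"
        have hv: "hd v = 0 \<or> hd v = 1" using cl_Suc_hd_tl[of v q] v x by auto
        have "tl a0 = tl b0" using nA a0 b0 by blast
        then show "tl v = w" using hv nA v a0 b0 unfolding w_def by metis
      qed
      have yu: "\<forall>v\<in>#y. \<not> oddn (tl v) = 1 \<longrightarrow> tl v = u"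
      proof (intro ballI impI)
        fix v assume v: "v \<in># y" "\<not> oddn (tl v) = 1"
        then have v0: "oddn (tl v) = 0" using oddn_cases by blast
        have hv: "hd v = 0 \<or> hd v = 1" using cl_Suc_hd_tl[of v q] v y by auto
        have "tl c0 = tl d0" using nB c0 d0 by blast
        then show "tl v = u" using hv nB v0 v(1) c0 d0 unfolding u_def by metis
      qed
      have wcl: "w \<in> cl q" "u \<in> cl q"
        using cl_Suc_hd_tl a0 c0 x y by (auto simp: w_def u_def)
      have "w \<noteq> u" using a0 c0 by (auto simp: w_def u_def)
      moreover have lw: "length w = q" "length u = q" using cl_len wcl by blast+
      ultimately obtain m where m: "m < q" "w ! m \<noteq> u ! m"
        using diff_pos[of w u] by auto
      have wm: "w!m \<in> {0,1}" "u!m \<in> {0,1}" using cl_nth wcl m by auto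
      let ?P = "\<lambda>v. oddn (tl v) = 1"
      let ?f = "\<lambda>v::nat list. v ! Suc m"
      have nthS: "\<And>v. v \<in># x \<or> v \<in># y \<Longrightarrow> v ! Suc m = tl v ! m \<and> tl v ! m \<le> 1"
      proof -
        fix v assume "v \<in># x \<or> v \<in># y"
        then have "v \<in> cl (Suc q)" using x y by auto
        then have "v = hd v # tl v" "tl v \<in> cl q" using cl_Suc_hd_tl by blast+
        then show "v ! Suc m = tl v ! m \<and> tl v ! m \<le> 1"
          using cl_nth[of "tl v" q m] m by (metis insert_iff le_numeral_extra(4) nth_Cons_Suc
             singletonD zero_le)
      qed
      have cx1: "msum ?f (filter_mset ?P x) = (cnt x 1 0 + cnt x 1 1) * w!m"
        using msum_const[of "filter_mset ?P x" ?f "w!m"] xw nthS Rx(5) by auto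
      have cx2: "msum ?f (filter_mset (\<lambda>v. \<not> ?P v) x) \<le> cnt x 0 0 + cnt x 0 1"
        using msum_le[of "filter_mset (\<lambda>v. \<not> ?P v) x" ?f] nthS Rx(6) by auto
      have cy1: "msum ?f (filter_mset (\<lambda>v. \<not> ?P v) y) = (cnt y 0 0 + cnt y 0 1) * u!m"
        using msum_const[of "filter_mset (\<lambda>v. \<not> ?P v) y" ?f "u!m"] yu nthS Ry(6) by auto
      have cy2: "msum ?f (filter_mset ?P y) \<le> cnt y 1 0 + cnt y 1 1"
        using msum_le[of "filter_mset ?P y" ?f] nthS Ry(5) by auto
      have eqc: "msum ?f x = msum ?f y" using st m by (auto simp: same_stats_def)
      have sx: "msum ?f x = msum ?f (filter_mset ?P x) + msum ?f (filter_mset (\<lambda>v. \<not> ?P v) x)"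
        by (rule msum_filter_split)
      have sy: "msum ?f y = msum ?f (filter_mset ?P y) + msum ?f (filter_mset (\<lambda>v. \<not> ?P v) y)"
        by (rule msum_filter_split)
      have False
      proof (cases "w ! m = 1")
        case True
        then have "u ! m = 0" using wm m by auto
        then show False using True cx1 cx2 cy1 cy2 eqc sx sy I Rx Ry lt by simp
      next
        case False
        then have "w ! m = 0" "u ! m = 1" using wm m by auto
        then show False using cx1 cx2 cy1 cy2 eqc sx sy I by simp
      qed
      then show ?thesis ..
    qed
  qed
qed

lemma nth_Suc_tl: "v \<noteq> [] \<Longrightarrow> v ! Suc m = tl v ! m"
  by (cases v) auto

lemma Conn_Suc:
  assumes IH: "Conn q"
  shows "Conn (Suc q)"
proof -
  have E: "(mstep (Suc q))\<^sup>*\<^sup>* x y"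
    if x: "set_mset x \<subseteq> cl (Suc q)" and y: "set_mset y \<subseteq> cl (Suc q)"
      and st: "same_stats (Suc q) x y" and es: "se x = se y" for x y
  proof -
    have Xcl: "set_mset (image_mset tl x) \<subseteq> cl q" using x cl_Suc_hd_tl by auto
    have Ycl: "set_mset (image_mset tl y) \<subseteq> cl q" using y cl_Suc_hd_tl by auto
    have colx: "msum (\<lambda>v. v!m) (image_mset tl x) = msum (\<lambda>v. v!Suc m) x" for m
    proof -
      have "msum (\<lambda>v. v!m) (image_mset tl x) = msum (\<lambda>v. tl v ! m) x" by (rule msum_image)
      also have "\<dots> = msum (\<lambda>v. v!Suc m) x"
        by (rule msum_cong) (use x in \<open>auto simp: cl_def intro!: nth_Suc_tl[symmetric]\<close>)
      finally show ?thesis .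
    qed
    have coly: "msum (\<lambda>v. v!m) (image_mset tl y) = msum (\<lambda>v. v!Suc m) y" for m
    proof -
      have "msum (\<lambda>v. v!m) (image_mset tl y) = msum (\<lambda>v. tl v ! m) y" by (rule msum_image)
      also have "\<dots> = msum (\<lambda>v. v!Suc m) y"
        by (rule msum_cong) (use y in \<open>auto simp: cl_def intro!: nth_Suc_tl[symmetric]\<close>)
      finally show ?thesis .
    qed
    have "same_stats q (image_mset tl x) (image_mset tl y)"
      unfolding same_stats_def
      using st es colx coly msum_image[of oddn tl x] msum_image[of oddn tl y]
      by (auto simp: same_stats_def se_def)
    then have "(mstep q)\<^sup>*\<^sup>* (image_mset tl x) (image_mset tl y)"
      using IH Xcl Ycl unfolding Conn_def by blast
    then obtain x' where x': "(mstep (Suc q))\<^sup>*\<^sup>* x x'" "image_mset tl x' = image_mset tl y"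
      using lift_rt[OF _ x refl] by blast
    have x'cl: "set_mset x' \<subseteq> cl (Suc q)" using mconn_cl[OF x'(1) x] .
    have x'st: "same_stats (Suc q) x' y"
      using same_stats_trans[OF same_stats_sym[OF mconn_stats[OF x'(1)]] st] .
    have "(mstep (Suc q))\<^sup>*\<^sup>* x' y"
      using step2_aux[OF refl x'cl y x'st x'(2)] .
    then show ?thesis using x'(1) by (rule rtranclp_trans[rotated])
  qed
  have M: "(mstep (Suc q))\<^sup>*\<^sup>* x y"
    if "se x - se y = n" "se y \<le> se x" "set_mset x \<subseteq> cl (Suc q)" "set_mset y \<subseteq> cl (Suc q)"
      "same_stats (Suc q) x y" for n x y
    using that
  proof (induction n arbitrary: x y rule: less_induct)
    case (less n x y)
    show ?case
    proof (cases "se x = se y")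
      case True
      then show ?thesis using E less.prems by blast
    next
      case False
      then have lt: "se y < se x" using less.prems(2) by simp
      from step0[OF less.prems(3,4,5) lt]
      have le2: "se y + 2 \<le> se x" and
        alt: "(\<exists>x'. mstep (Suc q) x x' \<and> se x' + 2 = se x) \<or> (\<exists>y'. mstep (Suc q) y y' \<and> se y' = se y + 2)"
        by blast+
      show ?thesis
      proof (cases "\<exists>x'. mstep (Suc q) x x' \<and> se x' + 2 = se x")
        case True
        then obtain x' where x': "mstep (Suc q) x x'" "se x' + 2 = se x" by blast
        have "(mstep (Suc q))\<^sup>*\<^sup>* x' y"
          using less.IH[of "se x' - se y" x' y] x' le2 less.prems
            mstep_cl[OF x'(1) less.prems(3)]
            same_stats_trans[OF same_stats_sym[OF mstep_stats[OF x'(1)]] less.prems(5)]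
          by linarith
        then show ?thesis using x'(1) by (simp add: converse_rtranclp_into_rtranclp)
      next
        case False
        then obtain y' where y': "mstep (Suc q) y y'" "se y' = se y + 2" using alt by blast
        have "(mstep (Suc q))\<^sup>*\<^sup>* x y'"
          using less.IH[of "se x - se y'" x y'] y' le2 less.prems
            mstep_cl[OF y'(1) less.prems(4)]
            same_stats_trans[OF less.prems(5) mstep_stats[OF y'(1)]]
          by linarith
        moreover have "(mstep (Suc q))\<^sup>*\<^sup>* y' y" using y'(1) mstep_sym by blast
        ultimately show ?thesis by (rule rtranclp_trans)
      qed
    qed
  qed
  show ?thesis
    unfolding Conn_def
  proof (intro allI impI)
    fix x y assume x: "set_mset x \<subseteq> cl (Suc q)" and y: "set_mset y \<subseteq> cl (Suc q)"
      and st: "same_stats (Suc q) x y"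
    show "(mstep (Suc q))\<^sup>*\<^sup>* x y"
    proof (cases "se y \<le> se x")
      case True
      then show ?thesis using M x y st by blast
    next
      case False
      then have "(mstep (Suc q))\<^sup>*\<^sup>* y x" using M[of y x] x y same_stats_sym[OF st] by simp
      then show ?thesis by (rule mconn_sym)
    qed
  qed
qed

lemma Conn_all: "Conn q"
  by (induction q) (auto intro: Conn_0 Conn_Suc)

definition Mv :: "nat \<Rightarrow> (nat list \<Rightarrow> int) \<Rightarrow> nat list multiset" where
  "Mv q x = (\<Sum>i\<in>cl q. replicate_mset (nat (x i)) i)"

lemma cells_cl: "cells p = cl (p - 1)"
  by (simp add: cells_def cl_def)

lemma count_Mv: "count (Mv q x) i = (if i \<in> cl q then nat (x i) else 0)"
proof -
  have "count (Mv q x) i = (\<Sum>j\<in>cl q. if j = i then nat (x j) else 0)"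
    unfolding Mv_def count_sum by (intro sum.cong) auto
  also have "\<dots> = (if i \<in> cl q then nat (x i) else 0)"
    using finite_cl by (simp add: sum.delta')
  finally show ?thesis .
qed

lemma set_Mv: "set_mset (Mv q x) \<subseteq> cl q"
proof
  fix i assume "i \<in># Mv q x"
  then have "count (Mv q x) i \<noteq> 0" by simp
  then show "i \<in> cl q" by (simp add: count_Mv split: if_splits)
qed

lemma msum_sum: "finite A \<Longrightarrow> msum f (\<Sum>i\<in>A. g i) = (\<Sum>i\<in>A. msum f (g i))"
  by (induction A rule: finite_induct) auto

lemma msum_repl: "msum f (replicate_mset n i) = n * f i"
  by (induction n) auto

lemma size_msum: "size X = msum (\<lambda>_. 1) X"
  by (induction X) auto

lemma msum_Mv: "msum f (Mv q x) = (\<Sum>i\<in>cl q. nat (x i) * f i)"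
  unfolding Mv_def using finite_cl by (simp add: msum_sum msum_repl)

lemma neg1_pow: "(-1::int) ^ n = 1 - 2 * int (n mod 2)"
  by (induction n) (auto simp: mod_Suc)

lemma Mt_stats:
  assumes p: "2 \<le> p" and x: "is_nonneg_vec p x"
  shows "Mt p x 0 = int (size (Mv (p-1) x))"
    and "m < p - 1 \<Longrightarrow> Mt p x (Suc m) = Mt p x 0 - 2 * int (msum (\<lambda>v. v!m) (Mv (p-1) x))"
    and "Mt p x p = Mt p x 0 - 2 * int (msum oddn (Mv (p-1) x))"
proof -
  have xnn: "\<And>i. 0 \<le> x i" using x by (simp add: is_nonneg_vec_def)
  have fin: "finite (cl (p-1))" by (rule finite_cl)
  have gen: "int (msum f (Mv (p-1) x)) = (\<Sum>i\<in>cl (p-1). x i * int (f i))" for f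
    unfolding msum_Mv by (simp add: xnn mult.commute)
  show M0: "Mt p x 0 = int (size (Mv (p-1) x))"
    unfolding size_msum gen Mt_def cells_cl by (simp add: modelM_def)
  show "m < p - 1 \<Longrightarrow> Mt p x (Suc m) = Mt p x 0 - 2 * int (msum (\<lambda>v. v!m) (Mv (p-1) x))"
  proof -
    assume m: "m < p - 1"
    have "Mt p x (Suc m) = (\<Sum>i\<in>cl (p-1). (1 - 2 * int (i!m)) * x i)"
      unfolding Mt_def cells_cl
    proof (intro sum.cong refl)
      fix i assume i: "i \<in> cl (p-1)"
      then have "i!m \<in> {0,1}" using cl_nth m by blast
      then have "(-1::int) ^ (i!m) = 1 - 2 * int (i!m)" by auto
      moreover have "Suc m < p" using m by linarith
      ultimately show "modelM p i (Suc m) * x i = (1 - 2 * int (i!m)) * x i"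
        by (simp add: modelM_def)
    qed
    also have "\<dots> = (\<Sum>i\<in>cl (p-1). x i) - 2 * (\<Sum>i\<in>cl (p-1). x i * int (i!m))"
      by (simp add: algebra_simps sum_subtractf sum_distrib_left)
    also have "(\<Sum>i\<in>cl (p-1). x i) = Mt p x 0"
      unfolding Mt_def cells_cl by (simp add: modelM_def)
    finally show ?thesis using gen[of "\<lambda>v. v!m"] by simp
  qed
  show "Mt p x p = Mt p x 0 - 2 * int (msum oddn (Mv (p-1) x))"
  proof -
    have "Mt p x p = (\<Sum>i\<in>cl (p-1). (1 - 2 * int (oddn i)) * x i)"
      unfolding Mt_def cells_cl
    proof (intro sum.cong refl)
      fix i assume i: "i \<in> cl (p-1)"
      show "modelM p i p * x i = (1 - 2 * int (oddn i)) * x i"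
        using p by (simp add: modelM_def neg1_pow oddn_def)
    qed
    also have "\<dots> = (\<Sum>i\<in>cl (p-1). x i) - 2 * (\<Sum>i\<in>cl (p-1). x i * int (oddn i))"
      by (simp add: algebra_simps sum_subtractf sum_distrib_left)
    also have "(\<Sum>i\<in>cl (p-1). x i) = Mt p x 0"
      unfolding Mt_def cells_cl by (simp add: modelM_def)
    finally show ?thesis using gen[of oddn] by simp
  qed
qed

lemma fiber_stats:
  assumes p: "2 \<le> p" and x: "x \<in> fiber p b" and y: "y \<in> fiber p b"
  shows "same_stats (p-1) (Mv (p-1) x) (Mv (p-1) y)"
proof -
  have xn: "is_nonneg_vec p x" and yn: "is_nonneg_vec p y" using x y by (auto simp: fiber_def)
  have eq: "\<And>j. j \<le> p \<Longrightarrow> Mt p x j = Mt p y j" using x y by (auto simp: fiber_def)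
  have s0: "size (Mv (p-1) x) = size (Mv (p-1) y)"
    using Mt_stats(1)[OF p xn] Mt_stats(1)[OF p yn] eq[of 0] by simp
  have sm: "msum (\<lambda>v. v!m) (Mv (p-1) x) = msum (\<lambda>v. v!m) (Mv (p-1) y)" if m: "m < p - 1" for m
    using Mt_stats(2)[OF p xn m] Mt_stats(2)[OF p yn m] eq[of 0] eq[of "Suc m"] m by simp
  have so: "msum oddn (Mv (p-1) x) = msum oddn (Mv (p-1) y)"
    using Mt_stats(3)[OF p xn] Mt_stats(3)[OF p yn] eq[of 0] eq[of p] by simp
  show ?thesis using s0 sm so by (simp add: same_stats_def)
qed

lemma sum_ind:
  assumes "finite A" "a \<in> A"
  shows "(\<Sum>i\<in>A. f i * (if i = a then 1 else 0)) = (f a :: int)"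
proof -
  have "(\<Sum>i\<in>A. f i * (if i = a then 1 else 0)) = (\<Sum>i\<in>A. if i = a then f i else 0)"
    by (intro sum.cong) auto
  then show ?thesis using assms by (simp add: sum.delta')
qed

lemma modelM_move:
  assumes p: "2 \<le> p" and j: "j \<le> p"
    and cells: "a \<in> cl (p-1)" "b \<in> cl (p-1)" "c \<in> cl (p-1)" "d \<in> cl (p-1)"
    and coord: "\<forall>m<p-1. a!m + b!m = c!m + d!m"
    and par: "oddn a + oddn b = oddn c + oddn d"
  shows "modelM p c j + modelM p d j = modelM p a j + modelM p b j"
proof (cases "j = 0")
  case True
  then show ?thesis by (simp add: modelM_def)
next
  case False
  show ?thesis
  proof (cases "j < p")
    case True
    define m where "m = j - 1"
    have m: "m < p - 1" "j - 1 = m" using True False by (auto simp: m_def)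
    have v: "a!m \<in> {0,1}" "b!m \<in> {0,1}" "c!m \<in> {0,1}" "d!m \<in> {0,1}"
      using cl_nth cells m(1) by blast+
    have pw: "\<And>v::nat. v \<in> {0,1} \<Longrightarrow> (-1::int)^v = 1 - 2 * int v" by auto
    have "a!m + b!m = c!m + d!m" using coord m(1) by blast
    then show ?thesis using True False m v pw[OF v(1)] pw[OF v(2)] pw[OF v(3)] pw[OF v(4)]
      by (simp add: modelM_def)
  next
    case False
    then have "j = p" using j by simp
    moreover have "p \<noteq> 0" using p by simp
    ultimately show ?thesis using par False
      by (simp add: modelM_def neg1_pow oddn_def)
  qed
qed

lemma Mt_add: "Mt p (\<lambda>i. x i + z i) j = Mt p x j + Mt p z j"
  unfolding Mt_def by (simp add: algebra_simps sum.distrib)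

lemma transfer_step:
  assumes p: "2 \<le> p" and st: "mstep (p-1) X Y" and x: "x \<in> fiber p b" and Xx: "Mv (p-1) x = X"
  shows "\<exists>y. y \<in> fiber p b \<and> Mv (p-1) y = Y \<and> fiber_edge p b (sqfree_deg2_moves p) x y"
proof -
  let ?q = "p - 1"
  obtain N a b' c d where XY: "X = N + {#a, b'#}" "Y = N + {#c, d#}"
    and cells: "a \<in> cl ?q" "b' \<in> cl ?q" "c \<in> cl ?q" "d \<in> cl ?q"
    and dist: "distinct [a, b', c, d]"
    and coord: "\<forall>m<?q. a!m + b'!m = c!m + d!m"
    and par: "oddn a + oddn b' = oddn c + oddn d"
    using st unfolding mstep_def by blast
  define \<delta> :: "nat list \<Rightarrow> int" where
    "\<delta> i = (if i = c then 1 else 0) + (if i = d then 1 else 0) - (if i = a then 1 else 0) - (if i = b' then 1 else 0)" for i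
  define y where "y i = x i + \<delta> i" for i
  have xn: "is_nonneg_vec p x" and xMt: "\<forall>j\<le>p. Mt p x j = Mt p b j" using x by (auto simp: fiber_def)
  have fin: "finite (cl ?q)" by (rule finite_cl)
  have Mtd: "Mt p \<delta> j = 0" if j: "j \<le> p" for j
  proof -
    have "Mt p \<delta> j = (\<Sum>i\<in>cl ?q. modelM p i j * (if i = c then 1 else 0)) + (\<Sum>i\<in>cl ?q. modelM p i j * (if i = d then 1 else 0))
        - (\<Sum>i\<in>cl ?q. modelM p i j * (if i = a then 1 else 0)) - (\<Sum>i\<in>cl ?q. modelM p i j * (if i = b' then 1 else 0))"
      unfolding Mt_def cells_cl \<delta>_def by (simp add: algebra_simps sum.distrib sum_subtractf)
    also have "\<dots> = modelM p c j + modelM p d j - modelM p a j - modelM p b' j"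
      using fin cells by (simp add: sum_ind)
    also have "\<dots> = 0" using modelM_move[OF p j cells(1-4) coord par] by simp
    finally show ?thesis .
  qed
  have dvec: "is_vec p \<delta>" using cells by (auto simp: is_vec_def cells_cl \<delta>_def)
  have dmove: "\<delta> \<in> sqfree_deg2_moves p"
    unfolding sqfree_deg2_moves_def
  proof (intro CollectI conjI)
    show "is_move p \<delta>" using dvec Mtd by (simp add: is_move_def)
    show "\<exists>i1 i2 i3 i4. i1 \<in> cells p \<and> i2 \<in> cells p \<and> i3 \<in> cells p \<and> i4 \<in> cells p \<and>
        distinct [i1, i2, i3, i4] \<and> \<delta> i1 = 1 \<and> \<delta> i2 = 1 \<and> \<delta> i3 = -1 \<and> \<delta> i4 = -1 \<and>
        (\<forall>i. i \<notin> {i1, i2, i3, i4} \<longrightarrow> \<delta> i = 0)"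
      using cells dist by (intro exI[of _ c] exI[of _ d] exI[of _ a] exI[of _ b'])
        (auto simp: cells_cl \<delta>_def)
  qed
  have cntX: "count X i = (if i \<in> cl ?q then nat (x i) else 0)" for i
    using Xx count_Mv by metis
  have xge: "0 \<le> x i" for i using xn by (simp add: is_nonneg_vec_def)
  have xout: "i \<notin> cl ?q \<Longrightarrow> x i = 0" for i using xn by (simp add: is_nonneg_vec_def is_vec_def cells_cl)
  have yval: "i \<in> cl ?q \<Longrightarrow> y i = int (count Y i)" for i
  proof -
    assume i: "i \<in> cl ?q"
    have "int (count X i) = x i" using cntX[of i] i xge[of i] by simp
    then show ?thesis using XY by (auto simp: y_def \<delta>_def)
  qed
  have yout: "i \<notin> cl ?q \<Longrightarrow> y i = 0" for i
    using xout cells by (auto simp: y_def \<delta>_def)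
  have yn: "is_nonneg_vec p y"
    unfolding is_nonneg_vec_def is_vec_def cells_cl
    using yval yout by (metis of_nat_0_le_iff order_refl)
  have yMt: "\<forall>j\<le>p. Mt p y j = Mt p b j"
    using xMt Mtd Mt_add[of p x \<delta>] by (simp add: y_def[abs_def])
  have yf: "y \<in> fiber p b" using yn yMt by (simp add: fiber_def)
  have "Mv ?q y = Y"
  proof (rule multiset_eqI)
    fix i
    show "count (Mv ?q y) i = count Y i"
    proof (cases "i \<in> cl ?q")
      case True
      then show ?thesis using yval[OF True] by (simp add: count_Mv)
    next
      case False
      have "count X i = 0" using cntX False by simp
      then have "count N i = 0" using XY by (auto split: if_splits)
      then show ?thesis using False cells XY by (auto simp: count_Mv)
    qed
  qed
  moreover have "fiber_edge p b (sqfree_deg2_moves p) x y"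
  proof -
    have "(\<lambda>i. y i - x i) = \<delta>" by (simp add: y_def)
    then show ?thesis using x yf dmove by (simp add: fiber_edge_def)
  qed
  ultimately show ?thesis using yf by blast
qed

lemma transfer_rt:
  assumes p: "2 \<le> p" and st: "(mstep (p-1))\<^sup>*\<^sup>* X Y" and x: "x \<in> fiber p b" and Xx: "Mv (p-1) x = X"
  shows "\<exists>y. y \<in> fiber p b \<and> Mv (p-1) y = Y \<and> (fiber_edge p b (sqfree_deg2_moves p))\<^sup>*\<^sup>* x y"
  using st
proof (induction rule: rtranclp_induct)
  case base
  then show ?case using x Xx by blast
next
  case (step Y' Y)
  then obtain y' where y': "y' \<in> fiber p b" "Mv (p-1) y' = Y'" "(fiber_edge p b (sqfree_deg2_moves p))\<^sup>*\<^sup>* x y'"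
    by blast
  obtain y where y: "y \<in> fiber p b" "Mv (p-1) y = Y" "fiber_edge p b (sqfree_deg2_moves p) y' y"
    using transfer_step[OF p step(2) y'(1) y'(2)] by blast
  have "(fiber_edge p b (sqfree_deg2_moves p))\<^sup>*\<^sup>* x y"
    using y'(3) y(3) by (meson rtranclp.rtrancl_into_rtrancl)
  then show ?case using y(1,2) by blast
qed

lemma Mv_inj:
  assumes "is_nonneg_vec p x" "is_nonneg_vec p y" "Mv (p-1) x = Mv (p-1) y"
  shows "x = y"
proof
  fix i
  show "x i = y i"
  proof (cases "i \<in> cl (p-1)")
    case True
    have "count (Mv (p-1) x) i = count (Mv (p-1) y) i" using assms(3) by simp
    then have "nat (x i) = nat (y i)" using True by (simp add: count_Mv)
    moreover have "0 \<le> x i" "0 \<le> y i" using assms(1,2) by (auto simp: is_nonneg_vec_def)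
    ultimately show ?thesis by simp
  next
    case False
    then show ?thesis using assms(1,2) by (simp add: is_nonneg_vec_def is_vec_def cells_cl)
  qed
qed

lemma finite_sqfree: "finite (sqfree_deg2_moves p)"
proof -
  let ?C = "cells p"
  let ?F = "(\<lambda>(f::nat list \<Rightarrow> int) i. if i \<in> ?C then f i else (0::int)) ` (PiE ?C (\<lambda>_. {-1, 0, 1::int}))"
  have finC: "finite ?C" by (simp add: cells_cl finite_cl)
  have "sqfree_deg2_moves p \<subseteq> ?F"
  proof
    fix z assume z: "z \<in> sqfree_deg2_moves p"
    then have zv: "is_vec p z" by (simp add: sqfree_deg2_moves_def is_move_def)
    from z obtain i1 i2 i3 i4 where
      "z i1 = 1" "z i2 = 1" "z i3 = -1" "z i4 = -1" "\<forall>i. i \<notin> {i1, i2, i3, i4} \<longrightarrow> z i = 0"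
      by (auto simp: sqfree_deg2_moves_def)
    then have zval: "z i \<in> {-1, 0, 1}" for i by (cases "i \<in> {i1, i2, i3, i4}") auto
    have "restrict z ?C \<in> PiE ?C (\<lambda>_. {-1, 0, 1})" using zval by (auto simp: PiE_iff)
    moreover have "z = (\<lambda>i. if i \<in> ?C then restrict z ?C i else 0)"
      using zv by (auto simp: is_vec_def)
    ultimately show "z \<in> ?F" by blast
  qed
  moreover have "finite ?F" using finC by (intro finite_imageI finite_PiE) auto
  ultimately show ?thesis by (rule finite_subset)
qed

theorem theorem1:
  fixes p :: nat
  assumes "2 \<le> p"
  shows "markov_basis p (sqfree_deg2_moves p) \<and>
         (\<exists>B. B \<subseteq> sqfree_deg2_moves p \<and> minimal_markov_basis p B)"
proof -
  let ?S = "sqfree_deg2_moves p"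
  have conn: "fiber_connected p b ?S" for b
    unfolding fiber_connected_def
  proof (intro ballI)
    fix x y assume x: "x \<in> fiber p b" and y: "y \<in> fiber p b"
    have "(mstep (p-1))\<^sup>*\<^sup>* (Mv (p-1) x) (Mv (p-1) y)"
      using Conn_all[of "p-1"] set_Mv fiber_stats[OF assms x y] unfolding Conn_def by blast
    then obtain y' where y': "y' \<in> fiber p b" "Mv (p-1) y' = Mv (p-1) y"
        "(fiber_edge p b ?S)\<^sup>*\<^sup>* x y'"
      using transfer_rt[OF assms _ x refl] by blast
    have "y' = y" using Mv_inj[OF _ _ y'(2)] y'(1) y by (auto simp: fiber_def)
    then show "(fiber_edge p b ?S)\<^sup>*\<^sup>* x y" using y'(3) by simp
  qed
  have mb: "markov_basis p ?S"
    unfolding markov_basis_def using finite_sqfree conn by (auto simp: sqfree_deg2_moves_def)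
  obtain B where B: "B \<subseteq> ?S \<and> markov_basis p B"
    and Bmin: "\<And>B'. B' \<subseteq> ?S \<and> markov_basis p B' \<Longrightarrow> card B \<le> card B'"
    using ex_has_least_nat[of "\<lambda>B. B \<subseteq> ?S \<and> markov_basis p B" ?S card] mb by blast
  have "minimal_markov_basis p B"
    unfolding minimal_markov_basis_def
  proof (intro conjI allI impI)
    show "markov_basis p B" using B by blast
    fix B' assume B': "B' \<subset> B"
    show "\<not> markov_basis p B'"
    proof
      assume mB': "markov_basis p B'"
      have "finite B" using B finite_sqfree finite_subset by blast
      then have "card B' < card B" using B' psubset_card_mono by blast
      moreover have "card B \<le> card B'" using Bmin[of B'] B B' mB' by blast
      ultimately show False by simp
    qed
  qed
  then show ?thesis using mb B by blast
qed

end
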